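(* Let $n,k\ge 1$ and let $\varphi$ be a tame automorphism of $\mathbf{C}[x_1,\dots,x_{n+k}]$. Partition the indices $\{1,\dots,n+k\}$ into $\{i_1,\dots,i_n\}$ and $\{j_1,\dots,j_k\}$. For polynomials $q_1,\dots,q_k\in\mathbf{C}[x_{i_1},\dots,x_{i_n}]$, let $\varphi_{q_1,\dots,q_k}$ be the $\mathbf{C}$-algebra endomorphism of $\mathbf{C}[x_{i_1},\dots,x_{i_n}]$ sending each $x_{i_l}$ ($1\le l\le n$) to the polynomial obtained from $\varphi(x_{i_l})$ by substituting $q_m$ for $x_{j_m}$, $1\le m\le k$. Then there exist polynomials $q_1,\dots,q_k\in\mathbf{C}[x_{i_1},\dots,x_{i_n}]$ such that $\varphi_{q_1,\dots,q_k}$ is injective.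
   Context: An automorphism of $\mathbf{C}[x_1,\dots,x_N]$ is elementary if it fixes all variables except one, $x_i$, and maps $x_i$ to $x_i + f(x_1,\dots,x_{i-1},x_{i+1},\dots,x_N)$; it is tame if it is a composition of elementary and linear automorphisms. *)

theory Defs
  imports Complex_Main "HOL-Library.Poly_Mapping"
begin

type_synonym mpoly = "(nat \<Rightarrow>\<^sub>0 nat) \<Rightarrow>\<^sub>0 complex"

definition Var :: "nat \<Rightarrow> mpoly" where
  "Var i = Poly_Mapping.single (Poly_Mapping.single i 1) 1"

definition Const :: "complex \<Rightarrow> mpoly" where
  "Const c = Poly_Mapping.single 0 c"

text \<open>Set of variables occurring in a polynomial; C[x_i : i in S] is {p. vars p \<subseteq> S}.\<close>
definition vars :: "mpoly \<Rightarrow> nat set" where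
  "vars p = (\<Union>m\<in>Poly_Mapping.keys p. Poly_Mapping.keys (m :: nat \<Rightarrow>\<^sub>0 nat))"

definition subst :: "(nat \<Rightarrow> mpoly) \<Rightarrow> mpoly \<Rightarrow> mpoly" where
  "subst s p = (\<Sum>m\<in>Poly_Mapping.keys p. Const (Poly_Mapping.lookup p m) *
     (\<Prod>i\<in>Poly_Mapping.keys (m :: nat \<Rightarrow>\<^sub>0 nat). s i ^ Poly_Mapping.lookup m i))"

text \<open>Endomorphisms of C[x_1,...,x_N] are represented by the images of the variables
  (a function s with s i the image of x_i for i in {1..N}, and s i = x_i otherwise).\<close>
definition compose :: "(nat \<Rightarrow> mpoly) \<Rightarrow> (nat \<Rightarrow> mpoly) \<Rightarrow> (nat \<Rightarrow> mpoly)" where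
  "compose f g = (\<lambda>i. subst f (g i))"

definition elementary :: "nat \<Rightarrow> (nat \<Rightarrow> mpoly) \<Rightarrow> bool" where
  "elementary N f \<longleftrightarrow> (\<exists>i g. i \<in> {1..N} \<and> vars g \<subseteq> {1..N} - {i} \<and>
      f = (\<lambda>j. if j = i then Var i + g else Var j))"

definition linear_aut :: "nat \<Rightarrow> (nat \<Rightarrow> mpoly) \<Rightarrow> bool" where
  "linear_aut N f \<longleftrightarrow> (\<exists>A B :: nat \<Rightarrow> nat \<Rightarrow> complex.
      (\<forall>i\<in>{1..N}. \<forall>l\<in>{1..N}. (\<Sum>j\<in>{1..N}. A i j * B j l) = (if i = l then 1 else 0)) \<and>
      (\<forall>i\<in>{1..N}. \<forall>l\<in>{1..N}. (\<Sum>j\<in>{1..N}. B i j * A j l) = (if i = l then 1 else 0)) \<and>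
      f = (\<lambda>i. if i \<in> {1..N} then (\<Sum>j\<in>{1..N}. Const (A i j) * Var j) else Var i))"

inductive tame :: "nat \<Rightarrow> (nat \<Rightarrow> mpoly) \<Rightarrow> bool" for N where
  elem: "elementary N f \<Longrightarrow> tame N f"
| lin: "linear_aut N f \<Longrightarrow> tame N f"
| comp: "tame N f \<Longrightarrow> tame N g \<Longrightarrow> tame N (compose f g)"

end

theory Submission
  imports Defs "Jordan_Normal_Form.Determinant" "Jordan_Normal_Form.Char_Poly"
begin

lemma Const_0[simp]: "Const 0 = 0" by (simp add: Const_def)
lemma Const_1[simp]: "Const 1 = 1" by (simp add: Const_def)
lemma Const_add: "Const (a + b) = Const a + Const b" by (simp add: Const_def single_add)
lemma Const_mult: "Const (a * b) = Const a * Const b" by (simp add: Const_def mult_single)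
lemma Const_uminus: "Const (- a) = - Const a" by (simp add: Const_def single_uminus)
lemma Const_diff: "Const (a - b) = Const a - Const b" by (simp add: Const_def single_diff)
lemma Const_inj[simp]: "Const a = Const b \<longleftrightarrow> a = b" by (metis Const_def lookup_single_eq)
lemma Const_eq_0[simp]: "Const a = 0 \<longleftrightarrow> a = 0" using Const_inj[of a 0] by simp
lemma Const_sum: "Const (sum f A) = (\<Sum>x\<in>A. Const (f x))"
  by (induction A rule: infinite_finite_induct) (auto simp: Const_add)
lemma Const_power: "Const (a ^ n) = Const a ^ n"
  by (induction n) (auto simp: Const_mult)
lemma lookup_Const: "Poly_Mapping.lookup (Const c) m = (if m = 0 then c else 0)"
  by (simp add: Const_def lookup_single)
lemma keys_Const: "Poly_Mapping.keys (Const c) \<subseteq> {0}"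
  by (simp add: Const_def)

lemma single_Const: "Poly_Mapping.single m c = Const c * Poly_Mapping.single m 1"
  by (simp add: Const_def mult_single)

definition mmono :: "(nat \<Rightarrow> mpoly) \<Rightarrow> (nat \<Rightarrow>\<^sub>0 nat) \<Rightarrow> mpoly" where
  "mmono s m = (\<Prod>i\<in>Poly_Mapping.keys m. s i ^ Poly_Mapping.lookup m i)"

lemma mmono_superset: "finite K \<Longrightarrow> Poly_Mapping.keys m \<subseteq> K \<Longrightarrow>
   mmono s m = (\<Prod>i\<in>K. s i ^ Poly_Mapping.lookup m i)"
  unfolding mmono_def by (rule prod.mono_neutral_left) (auto simp: in_keys_iff)

lemma mmono_0[simp]: "mmono s 0 = 1" by (simp add: mmono_def)

lemma mmono_add: "mmono s (a + b) = mmono s a * mmono s b"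
proof -
  let ?K = "Poly_Mapping.keys a \<union> Poly_Mapping.keys b"
  have "mmono s (a + b) = (\<Prod>i\<in>?K. s i ^ Poly_Mapping.lookup (a+b) i)"
    by (rule mmono_superset) (use keys_add[of a b] in auto)
  also have "\<dots> = (\<Prod>i\<in>?K. s i ^ Poly_Mapping.lookup a i) * (\<Prod>i\<in>?K. s i ^ Poly_Mapping.lookup b i)"
    by (simp add: lookup_add power_add prod.distrib)
  also have "\<dots> = mmono s a * mmono s b"
    by (subst (1 2) mmono_superset[where K="?K"]) auto
  finally show ?thesis .
qed

lemma subst_mmono: "subst s p = (\<Sum>m\<in>Poly_Mapping.keys p. Const (Poly_Mapping.lookup p m) * mmono s m)"
  by (simp add: subst_def mmono_def)

lemma subst_superset: "finite K \<Longrightarrow> Poly_Mapping.keys p \<subseteq> K \<Longrightarrow>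
   subst s p = (\<Sum>m\<in>K. Const (Poly_Mapping.lookup p m) * mmono s m)"
  unfolding subst_mmono by (rule sum.mono_neutral_left) (auto simp: in_keys_iff)

lemma subst_0[simp]: "subst s 0 = 0" by (simp add: subst_def)

lemma subst_add: "subst s (p + q) = subst s p + subst s q"
proof -
  let ?K = "Poly_Mapping.keys p \<union> Poly_Mapping.keys q"
  have "subst s (p + q) = (\<Sum>m\<in>?K. Const (Poly_Mapping.lookup (p+q) m) * mmono s m)"
    by (rule subst_superset) (use keys_add[of p q] in auto)
  also have "\<dots> = (\<Sum>m\<in>?K. Const (Poly_Mapping.lookup p m) * mmono s m) + (\<Sum>m\<in>?K. Const (Poly_Mapping.lookup q m) * mmono s m)"
    by (simp add: lookup_add Const_add distrib_right sum.distrib)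
  also have "\<dots> = subst s p + subst s q"
    by (subst (1 2) subst_superset[where K="?K"]) auto
  finally show ?thesis .
qed

lemma subst_sum: "subst s (sum f A) = (\<Sum>x\<in>A. subst s (f x))"
  by (induction A rule: infinite_finite_induct) (auto simp: subst_add)

lemma subst_single: "subst s (Poly_Mapping.single m c) = Const c * mmono s m"
  by (cases "c = 0") (auto simp: subst_mmono)

lemma poly_expansion: "(p :: 'a \<Rightarrow>\<^sub>0 'b::comm_monoid_add) =
   (\<Sum>m\<in>Poly_Mapping.keys p. Poly_Mapping.single m (Poly_Mapping.lookup p m))"
proof (rule poly_mapping_eqI)
  fix k
  have "Poly_Mapping.lookup (\<Sum>m\<in>Poly_Mapping.keys p. Poly_Mapping.single m (Poly_Mapping.lookup p m)) k
      = (\<Sum>m\<in>Poly_Mapping.keys p. (if m = k then Poly_Mapping.lookup p m else 0))"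
    by (simp add: lookup_sum lookup_single when_def)
  also have "\<dots> = Poly_Mapping.lookup p k"
    by (simp add: sum.delta' in_keys_iff)
  finally show "Poly_Mapping.lookup p k = Poly_Mapping.lookup (\<Sum>m\<in>Poly_Mapping.keys p. Poly_Mapping.single m (Poly_Mapping.lookup p m)) k" by simp
qed

lemma mult_expansion: "(p::mpoly) * q = (\<Sum>a\<in>Poly_Mapping.keys p. \<Sum>b\<in>Poly_Mapping.keys q.
    Poly_Mapping.single (a + b) (Poly_Mapping.lookup p a * Poly_Mapping.lookup q b))"
proof -
  have "p * q = (\<Sum>a\<in>Poly_Mapping.keys p. Poly_Mapping.single a (Poly_Mapping.lookup p a)) *
                (\<Sum>b\<in>Poly_Mapping.keys q. Poly_Mapping.single b (Poly_Mapping.lookup q b))"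
    by (subst (1) poly_expansion[of p], subst (1) poly_expansion[of q]) (rule refl)
  also have "\<dots> = (\<Sum>a\<in>Poly_Mapping.keys p. \<Sum>b\<in>Poly_Mapping.keys q.
    Poly_Mapping.single (a + b) (Poly_Mapping.lookup p a * Poly_Mapping.lookup q b))"
    by (simp add: sum_product mult_single)
  finally show ?thesis .
qed

lemma subst_mult: "subst s (p * q) = subst s p * subst s q"
proof -
  have "subst s (p * q) = (\<Sum>a\<in>Poly_Mapping.keys p. \<Sum>b\<in>Poly_Mapping.keys q.
     Const (Poly_Mapping.lookup p a * Poly_Mapping.lookup q b) * mmono s (a + b))"
    by (subst mult_expansion) (simp add: subst_sum subst_single)
  also have "\<dots> = subst s p * subst s q"
    by (simp add: subst_mmono sum_product Const_mult mmono_add mult_ac)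
  finally show ?thesis .
qed

lemma subst_Const[simp]: "subst s (Const c) = Const c"
  by (simp add: Const_def subst_single)

lemma subst_1[simp]: "subst s 1 = 1"
  using subst_Const[of s 1] by simp

lemma Var_keys: "Poly_Mapping.keys (Var i) = {Poly_Mapping.single i 1}"
  by (simp add: Var_def)

lemma subst_Var[simp]: "subst s (Var i) = s i"
  by (simp add: Var_def subst_single mmono_def)

lemma subst_uminus: "subst s (- p) = - subst s p"
  using subst_add[of s p "-p"] by (simp add: eq_neg_iff_add_eq_0 add.commute)

lemma subst_diff: "subst s (p - q) = subst s p - subst s q"
  using subst_add[of s p "-q"] by (simp add: subst_uminus)

lemma subst_power: "subst s (p ^ n) = subst s p ^ n"
  by (induction n) (auto simp: subst_mult)

lemma subst_prod: "subst s (prod f A) = (\<Prod>x\<in>A. subst s (f x))"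
  by (induction A rule: infinite_finite_induct) (auto simp: subst_mult)

lemma subst_mmono_mono: "subst f (mmono g m) = mmono (\<lambda>i. subst f (g i)) m"
  by (simp add: mmono_def subst_prod subst_power)

lemma subst_subst: "subst f (subst g p) = subst (\<lambda>i. subst f (g i)) p"
  by (simp add: subst_mmono[of g] subst_mmono[of "\<lambda>i. subst f (g i)"] subst_sum subst_mult subst_mmono_mono)

lemma Var_power: "Var i ^ e = Poly_Mapping.single (Poly_Mapping.single i e) 1"
  by (induction e) (auto simp: Var_def mult_single single_add[symmetric] mult.commute)

lemma prod_single: "(\<Prod>i\<in>A. Poly_Mapping.single (f i) (1::complex)) = Poly_Mapping.single (sum f A) 1"
  by (induction A rule: infinite_finite_induct) (auto simp: mult_single)

lemma mmono_Var: "mmono Var m = Poly_Mapping.single m 1"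
proof -
  have "mmono Var m = Poly_Mapping.single (\<Sum>i\<in>Poly_Mapping.keys m. Poly_Mapping.single i (Poly_Mapping.lookup m i)) 1"
    by (simp add: mmono_def Var_power prod_single)
  also have "\<dots> = Poly_Mapping.single m 1" by (simp flip: poly_expansion)
  finally show ?thesis .
qed

lemma subst_Var_id[simp]: "subst Var p = p"
proof -
  have "subst Var p = (\<Sum>m\<in>Poly_Mapping.keys p. Poly_Mapping.single m (Poly_Mapping.lookup p m))"
    by (simp add: subst_mmono mmono_Var single_Const[symmetric])
  also have "\<dots> = p" by (simp flip: poly_expansion)
  finally show ?thesis .
qed

lemma subst_cong:
  assumes a: "\<And>i. i \<in> vars p \<Longrightarrow> s i = t i"
  shows "subst s p = subst t p"
  unfolding subst_def
proof (rule sum.cong[OF refl])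
  fix m assume m: "m \<in> Poly_Mapping.keys p"
  have "(\<Prod>i\<in>Poly_Mapping.keys m. s i ^ Poly_Mapping.lookup m i) = (\<Prod>i\<in>Poly_Mapping.keys m. t i ^ Poly_Mapping.lookup m i)"
  proof (rule prod.cong[OF refl])
    fix i assume "i \<in> Poly_Mapping.keys m"
    with m have "i \<in> vars p" unfolding vars_def by blast
    then show "s i ^ Poly_Mapping.lookup m i = t i ^ Poly_Mapping.lookup m i" using a by simp
  qed
  then show "Const (Poly_Mapping.lookup p m) * (\<Prod>i\<in>Poly_Mapping.keys m. s i ^ Poly_Mapping.lookup m i) =
     Const (Poly_Mapping.lookup p m) * (\<Prod>i\<in>Poly_Mapping.keys m. t i ^ Poly_Mapping.lookup m i)" by simp
qed

lemma in_vars_iff: "i \<in> vars p \<longleftrightarrow> (\<exists>m\<in>Poly_Mapping.keys p. i \<in> Poly_Mapping.keys m)"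
  by (simp add: vars_def)

lemma vars_mmono_keys: "Poly_Mapping.keys p \<subseteq> Poly_Mapping.keys q \<Longrightarrow> vars p \<subseteq> vars q"
  by (auto simp: vars_def)

lemma vars_add: "vars (p + q) \<subseteq> vars p \<union> vars q"
  using keys_add[of p q] by (auto simp: vars_def)

lemma vars_uminus[simp]: "vars (- p) = vars p"
  by (simp add: vars_def)

lemma vars_diff: "vars (p - q) \<subseteq> vars p \<union> vars q"
  using vars_add[of p "-q"] by simp

lemma vars_sum: "vars (sum f A) \<subseteq> (\<Union>x\<in>A. vars (f x))"
proof (induction A rule: infinite_finite_induct)
  case (insert x F)
  then show ?case using vars_add[of "f x" "sum f F"] by auto
qed (auto simp: vars_def)

lemma vars_mult: "vars (p * q) \<subseteq> vars p \<union> vars q"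
proof
  fix i assume "i \<in> vars (p * q)"
  then obtain m where m: "m \<in> Poly_Mapping.keys (p * q)" "i \<in> Poly_Mapping.keys m" by (auto simp: vars_def)
  then obtain a b where "a \<in> Poly_Mapping.keys p" "b \<in> Poly_Mapping.keys q" "m = a + b"
    using keys_mult[of p q] by blast
  with m keys_add[of a b] show "i \<in> vars p \<union> vars q" by (auto simp: vars_def)
qed

lemma vars_Const[simp]: "vars (Const c) = {}"
  using keys_Const[of c] by (auto simp: vars_def)

lemma vars_Var[simp]: "vars (Var i) = {i}"
  by (simp add: vars_def Var_keys)

lemma vars_1[simp]: "vars 1 = {}" using vars_Const[of 1] by simp
lemma vars_0[simp]: "vars 0 = {}" using vars_Const[of 0] by simp

lemma vars_power: "vars (p ^ n) \<subseteq> vars p"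
proof (induction n)
  case (Suc n)
  then show ?case using vars_mult[of p "p ^ n"] by auto
qed auto

lemma vars_prod: "vars (prod f A) \<subseteq> (\<Union>x\<in>A. vars (f x))"
proof (induction A rule: infinite_finite_induct)
  case (insert x F)
  then show ?case using vars_mult[of "f x" "prod f F"] by auto
qed auto

lemma vars_mmono: "vars (mmono s m) \<subseteq> (\<Union>i\<in>Poly_Mapping.keys m. vars (s i))"
proof -
  have "vars (mmono s m) \<subseteq> (\<Union>i\<in>Poly_Mapping.keys m. vars (s i ^ Poly_Mapping.lookup m i))"
    unfolding mmono_def by (rule vars_prod)
  also have "\<dots> \<subseteq> (\<Union>i\<in>Poly_Mapping.keys m. vars (s i))"
    using vars_power by blast
  finally show ?thesis .
qed

lemma vars_subst: "vars (subst s p) \<subseteq> (\<Union>i\<in>vars p. vars (s i))"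
proof -
  have "vars (subst s p) \<subseteq> (\<Union>m\<in>Poly_Mapping.keys p. vars (Const (Poly_Mapping.lookup p m) * mmono s m))"
    unfolding subst_mmono by (rule vars_sum)
  also have "\<dots> \<subseteq> (\<Union>m\<in>Poly_Mapping.keys p. vars (mmono s m))"
    using vars_mult[of "Const _" "mmono s _"] by fastforce
  also have "\<dots> \<subseteq> (\<Union>m\<in>Poly_Mapping.keys p. \<Union>i\<in>Poly_Mapping.keys m. vars (s i))"
    using vars_mmono by blast
  also have "\<dots> = (\<Union>i\<in>vars p. vars (s i))"
    by (auto simp: vars_def)
  finally show ?thesis .
qed

definition D :: "nat \<Rightarrow> mpoly \<Rightarrow> mpoly" where
  "D l p = (\<Sum>m\<in>Poly_Mapping.keys p. Poly_Mapping.single (m - Poly_Mapping.single l 1)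
      (of_nat (Poly_Mapping.lookup m l) * Poly_Mapping.lookup p m))"

lemma D_superset: "finite K \<Longrightarrow> Poly_Mapping.keys p \<subseteq> K \<Longrightarrow>
   D l p = (\<Sum>m\<in>K. Poly_Mapping.single (m - Poly_Mapping.single l 1)
      (of_nat (Poly_Mapping.lookup m l) * Poly_Mapping.lookup p m))"
  unfolding D_def by (rule sum.mono_neutral_left) (auto simp: in_keys_iff)

lemma D_0[simp]: "D l 0 = 0" by (simp add: D_def)

lemma D_add: "D l (p + q) = D l p + D l q"
proof -
  let ?K = "Poly_Mapping.keys p \<union> Poly_Mapping.keys q"
  let ?f = "\<lambda>r m. Poly_Mapping.single (m - Poly_Mapping.single l 1)
      (of_nat (Poly_Mapping.lookup m l) * Poly_Mapping.lookup r m)"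
  have "D l (p + q) = (\<Sum>m\<in>?K. ?f (p + q) m)"
    by (rule D_superset) (use keys_add[of p q] in auto)
  also have "\<dots> = (\<Sum>m\<in>?K. ?f p m) + (\<Sum>m\<in>?K. ?f q m)"
    by (simp add: lookup_add distrib_left single_add sum.distrib)
  also have "\<dots> = D l p + D l q"
    by (subst (1 2) D_superset[where K="?K"]) auto
  finally show ?thesis .
qed

lemma D_sum: "D l (sum f A) = (\<Sum>x\<in>A. D l (f x))"
  by (induction A rule: infinite_finite_induct) (auto simp: D_add)

lemma D_single: "D l (Poly_Mapping.single m c) =
   Poly_Mapping.single (m - Poly_Mapping.single l 1) (of_nat (Poly_Mapping.lookup m l) * c)"
  by (cases "c = 0") (auto simp: D_def)

lemma lookup_minus_single: "Poly_Mapping.lookup (m - Poly_Mapping.single l (1::nat)) i =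
   Poly_Mapping.lookup m i - (if i = l then 1 else 0)"
  by (simp add: minus_poly_mapping.rep_eq lookup_single)

lemma minus_add_swap: "0 < Poly_Mapping.lookup a l \<Longrightarrow>
   a - Poly_Mapping.single l (1::nat) + b = a + b - Poly_Mapping.single l 1"
  by (rule poly_mapping_eqI) (auto simp: lookup_add minus_poly_mapping.rep_eq lookup_single when_def)

lemma add_minus_swap: "0 < Poly_Mapping.lookup b l \<Longrightarrow>
   a + (b - Poly_Mapping.single l (1::nat)) = a + b - Poly_Mapping.single l 1"
  by (rule poly_mapping_eqI) (auto simp: lookup_add minus_poly_mapping.rep_eq lookup_single when_def)

lemma minus_add_swap': "0 < Poly_Mapping.lookup a l \<Longrightarrow>
   a - Poly_Mapping.single l (Suc 0) + b = a + b - Poly_Mapping.single l (Suc 0)"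
  using minus_add_swap by simp

lemma add_minus_swap': "0 < Poly_Mapping.lookup b l \<Longrightarrow>
   a + (b - Poly_Mapping.single l (Suc 0)) = a + b - Poly_Mapping.single l (Suc 0)"
  using add_minus_swap by simp

lemma D_mult_single: "D l (Poly_Mapping.single a c * Poly_Mapping.single b d) =
   D l (Poly_Mapping.single a c) * Poly_Mapping.single b d + Poly_Mapping.single a c * D l (Poly_Mapping.single b d)"
proof -
  have L: "D l (Poly_Mapping.single a c * Poly_Mapping.single b d) =
     Poly_Mapping.single (a + b - Poly_Mapping.single l 1)
        (of_nat (Poly_Mapping.lookup a l) * c * d + of_nat (Poly_Mapping.lookup b l) * c * d)"
    by (simp add: mult_single D_single lookup_add algebra_simps)
  have R: "D l (Poly_Mapping.single a c) * Poly_Mapping.single b d + Poly_Mapping.single a c * D l (Poly_Mapping.single b d)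
     = Poly_Mapping.single (a - Poly_Mapping.single l 1 + b) (of_nat (Poly_Mapping.lookup a l) * c * d)
     + Poly_Mapping.single (a + (b - Poly_Mapping.single l 1)) (of_nat (Poly_Mapping.lookup b l) * c * d)"
    by (simp add: mult_single D_single algebra_simps)
  show ?thesis
  proof (cases "Poly_Mapping.lookup a l = 0"; cases "Poly_Mapping.lookup b l = 0")
    assume "Poly_Mapping.lookup a l = 0" "Poly_Mapping.lookup b l = 0"
    then show ?thesis unfolding L R by simp
  next
    assume "Poly_Mapping.lookup a l = 0" "Poly_Mapping.lookup b l \<noteq> 0"
    then show ?thesis unfolding L R by (simp add: add_minus_swap add_minus_swap')
  next
    assume "Poly_Mapping.lookup a l \<noteq> 0" "Poly_Mapping.lookup b l = 0"
    then show ?thesis unfolding L R by (simp add: minus_add_swap minus_add_swap')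
  next
    assume "Poly_Mapping.lookup a l \<noteq> 0" "Poly_Mapping.lookup b l \<noteq> 0"
    then show ?thesis unfolding L R by (simp add: minus_add_swap add_minus_swap minus_add_swap' add_minus_swap' single_add)
  qed
qed

lemma D_mult: "D l (p * q) = D l p * q + p * D l q"
proof -
  let ?sp = "\<lambda>a. Poly_Mapping.single a (Poly_Mapping.lookup p a)"
  let ?sq = "\<lambda>b. Poly_Mapping.single b (Poly_Mapping.lookup q b)"
  have "D l (p * q) = D l ((\<Sum>a\<in>Poly_Mapping.keys p. ?sp a) * (\<Sum>b\<in>Poly_Mapping.keys q. ?sq b))"
    by (subst (1) poly_expansion[of p], subst (1) poly_expansion[of q]) (rule refl)
  also have "\<dots> = (\<Sum>a\<in>Poly_Mapping.keys p. \<Sum>b\<in>Poly_Mapping.keys q. D l (?sp a) * ?sq b + ?sp a * D l (?sq b))"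
    by (simp add: sum_product D_sum D_mult_single)
  also have "\<dots> = D l (\<Sum>a\<in>Poly_Mapping.keys p. ?sp a) * (\<Sum>b\<in>Poly_Mapping.keys q. ?sq b)
     + (\<Sum>a\<in>Poly_Mapping.keys p. ?sp a) * D l (\<Sum>b\<in>Poly_Mapping.keys q. ?sq b)"
    by (simp add: sum_product D_sum sum.distrib)
  also have "\<dots> = D l p * q + p * D l q"
    by (simp flip: poly_expansion)
  finally show ?thesis .
qed

lemma D_Const[simp]: "D l (Const c) = 0"
  by (simp add: Const_def D_single)

lemma D_1[simp]: "D l 1 = 0"
  using D_Const[of l 1] by simp

lemma D_Var: "D l (Var i) = (if i = l then 1 else 0)"
  by (simp add: Var_def D_single lookup_single)

lemma D_uminus: "D l (- p) = - D l p"
  using D_add[of l p "-p"] by (simp add: eq_neg_iff_add_eq_0 add.commute)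

lemma D_diff: "D l (p - q) = D l p - D l q"
  using D_add[of l p "-q"] by (simp add: D_uminus)

lemma D_Const_mult: "D l (Const c * p) = Const c * D l p"
  by (simp add: D_mult)

lemma D_notin: "l \<notin> vars p \<Longrightarrow> D l p = 0"
  unfolding D_def by (rule sum.neutral) (auto simp: vars_def in_keys_iff)

lemma keys_minus_single: "Poly_Mapping.keys (m - Poly_Mapping.single l (1::nat)) \<subseteq> Poly_Mapping.keys m"
  by (auto simp: in_keys_iff minus_poly_mapping.rep_eq)

lemma keys_D: "Poly_Mapping.keys (D l p) \<subseteq> (\<lambda>m. m - Poly_Mapping.single l 1) ` Poly_Mapping.keys p"
proof -
  have "Poly_Mapping.keys (D l p) \<subseteq> (\<Union>m\<in>Poly_Mapping.keys p. Poly_Mapping.keys (Poly_Mapping.single (m - Poly_Mapping.single l 1)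
      (of_nat (Poly_Mapping.lookup m l) * Poly_Mapping.lookup p m)))"
    unfolding D_def by (rule keys_sum)
  also have "\<dots> \<subseteq> (\<lambda>m. m - Poly_Mapping.single l 1) ` Poly_Mapping.keys p"
    by (rule UN_least) (simp add: keys_single)
  finally show ?thesis .
qed

lemma vars_D: "vars (D l p) \<subseteq> vars p"
proof
  fix i assume "i \<in> vars (D l p)"
  then obtain m where m: "m \<in> Poly_Mapping.keys (D l p)" "i \<in> Poly_Mapping.keys m" by (auto simp: vars_def)
  from m(1) keys_D obtain m' where "m' \<in> Poly_Mapping.keys p" "m = m' - Poly_Mapping.single l 1"
    by blast
  with m(2) keys_minus_single[of m' l] show "i \<in> vars p" unfolding vars_def by blast
qed

subsection \<open>Chain rule\<close>

definition CR :: "nat set \<Rightarrow> (nat \<Rightarrow> mpoly) \<Rightarrow> mpoly \<Rightarrow> bool" where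
  "CR V s p \<longleftrightarrow> (\<forall>l. D l (subst s p) = (\<Sum>v\<in>V. subst s (D v p) * D l (s v)))"

lemma CR_add: "CR V s p \<Longrightarrow> CR V s q \<Longrightarrow> CR V s (p + q)"
  by (simp add: CR_def subst_add D_add distrib_right sum.distrib)

lemma CR_mult:
  assumes p: "CR V s p" and q: "CR V s q" shows "CR V s (p * q)"
  unfolding CR_def
proof
  fix l
  let ?Sp = "subst s p" and ?Sq = "subst s q"
  have "D l (subst s (p * q)) = (\<Sum>v\<in>V. subst s (D v p) * D l (s v)) * ?Sq + ?Sp * (\<Sum>v\<in>V. subst s (D v q) * D l (s v))"
    using p q unfolding CR_def by (simp add: subst_mult D_mult)
  also have "\<dots> = (\<Sum>v\<in>V. subst s (D v p) * D l (s v) * ?Sq) + (\<Sum>v\<in>V. ?Sp * (subst s (D v q) * D l (s v)))"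
    by (simp add: sum_distrib_right sum_distrib_left)
  also have "\<dots> = (\<Sum>v\<in>V. subst s (D v p) * D l (s v) * ?Sq + ?Sp * (subst s (D v q) * D l (s v)))"
    by (rule sum.distrib[symmetric])
  also have "\<dots> = (\<Sum>v\<in>V. subst s (D v (p * q)) * D l (s v))"
  proof (rule sum.cong[OF refl])
    fix v
    show "subst s (D v p) * D l (s v) * ?Sq + ?Sp * (subst s (D v q) * D l (s v)) = subst s (D v (p * q)) * D l (s v)"
      by (simp only: D_mult subst_add subst_mult) (simp add: distrib_left mult_ac)
  qed
  finally show "D l (subst s (p * q)) = (\<Sum>v\<in>V. subst s (D v (p * q)) * D l (s v))" .
qed

lemma CR_Const: "CR V s (Const c)"
  by (simp add: CR_def)

lemma CR_0: "CR V s 0" using CR_Const[of V s 0] by simp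
lemma CR_1: "CR V s 1" using CR_Const[of V s 1] by simp

lemma CR_Var: assumes "finite V" "i \<in> V" shows "CR V s (Var i)"
  unfolding CR_def
proof
  fix l
  have "(\<Sum>v\<in>V. subst s (D v (Var i)) * D l (s v)) = (\<Sum>v\<in>V. if v = i then D l (s v) else 0)"
    by (rule sum.cong[OF refl]) (auto simp: D_Var)
  also have "\<dots> = D l (s i)" using assms by (simp add: sum.delta')
  finally show "D l (subst s (Var i)) = (\<Sum>v\<in>V. subst s (D v (Var i)) * D l (s v))" by simp
qed

lemma CR_sum: "(\<And>x. x \<in> A \<Longrightarrow> CR V s (f x)) \<Longrightarrow> CR V s (sum f A)"
  by (induction A rule: infinite_finite_induct) (auto intro: CR_add CR_0)

lemma CR_prod: "(\<And>x. x \<in> A \<Longrightarrow> CR V s (f x)) \<Longrightarrow> CR V s (prod f A)"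
  by (induction A rule: infinite_finite_induct) (auto intro: CR_mult CR_1)

lemma CR_power: "CR V s p \<Longrightarrow> CR V s (p ^ n)"
  by (induction n) (auto intro: CR_mult CR_1)

lemma CR_all: assumes "finite V" "vars p \<subseteq> V" shows "CR V s p"
proof -
  have "CR V s (\<Sum>m\<in>Poly_Mapping.keys p. Const (Poly_Mapping.lookup p m) * mmono Var m)"
  proof (rule CR_sum, rule CR_mult[OF CR_Const])
    fix m assume m: "m \<in> Poly_Mapping.keys p"
    show "CR V s (mmono Var m)" unfolding mmono_def
    proof (rule CR_prod, rule CR_power, rule CR_Var[OF assms(1)])
      fix i assume "i \<in> Poly_Mapping.keys m"
      with m assms(2) show "i \<in> V" by (auto simp: vars_def)
    qed
  qed
  then show ?thesis using subst_Var_id[of p] by (simp add: subst_mmono)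
qed

lemma chain_rule: "finite V \<Longrightarrow> vars p \<subseteq> V \<Longrightarrow>
  D l (subst s p) = (\<Sum>v\<in>V. subst s (D v p) * D l (s v))"
  using CR_all[of V p s] by (simp add: CR_def)

subsection \<open>Evaluation at 0\<close>

definition ev0 :: "mpoly \<Rightarrow> complex" where "ev0 p = Poly_Mapping.lookup p 0"

lemma mmono_zero_fun: "mmono (\<lambda>_. 0) m = (if m = 0 then 1 else 0)"
proof (cases "m = 0")
  case False
  then obtain i where i: "i \<in> Poly_Mapping.keys m"
    by (metis keys_eq_empty ex_in_conv) 
  then have "Poly_Mapping.lookup m i \<noteq> 0" by (simp add: in_keys_iff)
  with i False show ?thesis unfolding mmono_def
    by (auto intro!: prod_zero bexI[of _ i])
qed simp

lemma subst_zero_fun: "subst (\<lambda>_. 0) p = Const (ev0 p)"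
proof -
  have "subst (\<lambda>_. 0) p = (\<Sum>m\<in>Poly_Mapping.keys p. if m = 0 then Const (Poly_Mapping.lookup p m) else 0)"
    by (simp add: subst_mmono mmono_zero_fun if_distrib cong: if_cong)
  also have "\<dots> = Const (ev0 p)"
    by (simp add: sum.delta' ev0_def in_keys_iff)
  finally show ?thesis .
qed

lemma ev0_Const[simp]: "ev0 (Const c) = c" by (simp add: ev0_def lookup_Const)
lemma ev0_add: "ev0 (p + q) = ev0 p + ev0 q" by (simp add: ev0_def lookup_add)
lemma ev0_mult: "ev0 (p * q) = ev0 p * ev0 q"
  using subst_mult[of "\<lambda>_. 0" p q] by (simp add: subst_zero_fun Const_mult[symmetric])
lemma single_Suc0_nz: "Poly_Mapping.single i (Suc 0) \<noteq> 0"
  by (metis lookup_single_eq lookup_zero nat.distinct(1))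

lemma ev0_Var[simp]: "ev0 (Var i) = 0" by (simp add: ev0_def Var_def lookup_single when_def single_Suc0_nz)
lemma ev0_0[simp]: "ev0 0 = 0" by (simp add: ev0_def)
lemma ev0_1[simp]: "ev0 1 = 1" by (simp add: ev0_def)

lemma ev0_hom: "comm_ring_hom ev0"
  by unfold_locales (simp_all add: ev0_add ev0_mult)

lemma ev0_sum: "ev0 (sum f A) = (\<Sum>x\<in>A. ev0 (f x))"
  by (induction A rule: infinite_finite_induct) (auto simp: ev0_add)

lemma ev0_subst: assumes "\<And>v. ev0 (s v) = 0" shows "ev0 (subst s X) = ev0 X"
proof -
  have "Const (ev0 (subst s X)) = subst (\<lambda>_. 0) (subst s X)" by (simp add: subst_zero_fun)
  also have "\<dots> = subst (\<lambda>i. subst (\<lambda>_. 0) (s i)) X" by (rule subst_subst)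
  also have "\<dots> = subst (\<lambda>_. 0) X" by (simp add: subst_zero_fun assms)
  also have "\<dots> = Const (ev0 X)" by (simp add: subst_zero_fun)
  finally show ?thesis by simp
qed

definition tdeg :: "(nat \<Rightarrow>\<^sub>0 nat) \<Rightarrow> nat" where
  "tdeg m = sum (Poly_Mapping.lookup m) (Poly_Mapping.keys m)"

lemma lookup_minus_e: "Poly_Mapping.lookup (m - Poly_Mapping.single l (1::nat)) i =
   Poly_Mapping.lookup m i - (if i = l then 1 else 0)"
  by (simp add: minus_poly_mapping.rep_eq lookup_single when_def)

lemma tdeg_minus: assumes "0 < Poly_Mapping.lookup m l"
  shows "tdeg m = Suc (tdeg (m - Poly_Mapping.single l 1))"
proof -
  let ?e = "Poly_Mapping.single l (1::nat)"
  have l: "l \<in> Poly_Mapping.keys m" using assms by (simp add: in_keys_iff)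
  have pt: "\<And>i. Poly_Mapping.lookup m i = Poly_Mapping.lookup (m - ?e) i + (if i = l then 1 else 0)"
    using assms by (simp add: minus_poly_mapping.rep_eq lookup_single when_def)
  have "tdeg (m - ?e) = sum (Poly_Mapping.lookup (m - ?e)) (Poly_Mapping.keys m)"
    unfolding tdeg_def
    by (rule sum.mono_neutral_left) (auto simp: in_keys_iff minus_poly_mapping.rep_eq)
  moreover have "tdeg m = sum (\<lambda>i. Poly_Mapping.lookup (m - ?e) i + (if i = l then 1 else 0)) (Poly_Mapping.keys m)"
    unfolding tdeg_def by (rule sum.cong[OF refl]) (rule pt)
  ultimately show ?thesis using l by (simp add: sum.distrib sum.delta')
qed

lemma tdeg_0: "tdeg m = 0 \<Longrightarrow> m = 0"
  unfolding tdeg_def by (metis finite_keys in_keys_iff keys_eq_empty sum_eq_0_iff ex_in_conv)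

lemma keys_D': "Poly_Mapping.keys (D l p) \<subseteq>
   (\<lambda>m. m - Poly_Mapping.single l 1) ` {m \<in> Poly_Mapping.keys p. 0 < Poly_Mapping.lookup m l}"
proof -
  have "Poly_Mapping.keys (D l p) \<subseteq> (\<Union>m\<in>Poly_Mapping.keys p. Poly_Mapping.keys (Poly_Mapping.single (m - Poly_Mapping.single l 1)
      (of_nat (Poly_Mapping.lookup m l) * Poly_Mapping.lookup p m)))"
    unfolding D_def by (rule keys_sum)
  also have "\<dots> \<subseteq> (\<lambda>m. m - Poly_Mapping.single l 1) ` {m \<in> Poly_Mapping.keys p. 0 < Poly_Mapping.lookup m l}"
    by (rule UN_least) (auto simp: keys_single)
  finally show ?thesis .
qed

lemma eq_of_minus: assumes "0 < Poly_Mapping.lookup a l" "0 < Poly_Mapping.lookup b l"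
  "a - Poly_Mapping.single l 1 = b - Poly_Mapping.single l (1::nat)"
shows "a = b"
proof (rule poly_mapping_eqI)
  fix i
  have "Poly_Mapping.lookup (a - Poly_Mapping.single l 1) i = Poly_Mapping.lookup (b - Poly_Mapping.single l 1) i"
    using assms(3) by simp
  then show "Poly_Mapping.lookup a i = Poly_Mapping.lookup b i"
    using assms(1,2) by (simp add: minus_poly_mapping.rep_eq lookup_single when_def split: if_splits)
qed

lemma D_all_zero: assumes "\<And>l. D l P = 0" shows "Poly_Mapping.keys P \<subseteq> {0}"
proof
  fix m assume m: "m \<in> Poly_Mapping.keys P"
  show "m \<in> {0}"
  proof (rule ccontr)
    assume "m \<notin> {0}"
    then obtain l where l: "l \<in> Poly_Mapping.keys m" by (metis keys_eq_empty ex_in_conv singletonI)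
    then have ml: "0 < Poly_Mapping.lookup m l" by (simp add: in_keys_iff)
    let ?e = "Poly_Mapping.single l (1::nat)"
    have "Poly_Mapping.lookup (D l P) (m - ?e) = (\<Sum>m'\<in>Poly_Mapping.keys P.
        if m' - ?e = m - ?e then of_nat (Poly_Mapping.lookup m' l) * Poly_Mapping.lookup P m' else 0)"
      by (simp add: D_def lookup_sum lookup_single when_def)
    also have "\<dots> = (\<Sum>m'\<in>Poly_Mapping.keys P.
        if m' = m then of_nat (Poly_Mapping.lookup m' l) * Poly_Mapping.lookup P m' else 0)"
    proof (rule sum.cong[OF refl])
      fix m' assume "m' \<in> Poly_Mapping.keys P"
      show "(if m' - ?e = m - ?e then of_nat (Poly_Mapping.lookup m' l) * Poly_Mapping.lookup P m' else 0) =
        (if m' = m then of_nat (Poly_Mapping.lookup m' l) * Poly_Mapping.lookup P m' else (0::complex))"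
      proof (cases "m' = m")
        case False
        show ?thesis
        proof (cases "Poly_Mapping.lookup m' l = 0")
          case False
          then have "m' - ?e \<noteq> m - ?e" using eq_of_minus[of m' l m] ml \<open>m' \<noteq> m\<close> by auto
          then show ?thesis using \<open>m' \<noteq> m\<close> by simp
        qed (simp add: \<open>m' \<noteq> m\<close>)
      qed simp
    qed
    also have "\<dots> = of_nat (Poly_Mapping.lookup m l) * Poly_Mapping.lookup P m"
      using m by (simp add: sum.delta')
    finally have "Poly_Mapping.lookup (D l P) (m - ?e) \<noteq> 0"
      using m ml by (simp add: in_keys_iff)
    with assms show False by simp
  qed
qed

lemma keys_0_Const: assumes "Poly_Mapping.keys P \<subseteq> {0}" shows "P = Const (Poly_Mapping.lookup P 0)"
proof (rule poly_mapping_eqI)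
  fix k show "Poly_Mapping.lookup P k = Poly_Mapping.lookup (Const (Poly_Mapping.lookup P 0)) k"
    using assms by (cases "k = 0") (auto simp: lookup_Const in_keys_iff)
qed

lemma sum_reindex_e: fixes n :: nat assumes "bij_betw e {0..<n} I" shows "(\<Sum>a<n. f (e a)) = sum f I"
proof -
  have "(\<Sum>a<n. f (e a)) = (\<Sum>a\<in>{0..<n}. f (e a))" by (rule sum.cong) auto
  also have "\<dots> = sum f I" by (rule sum.reindex_bij_betw[OF assms])
  finally show ?thesis .
qed

lemma jac_step:
  fixes \<psi> :: "nat \<Rightarrow> mpoly"
  assumes fin: "finite I" and e: "bij_betw e {0..<n} I"
    and det: "det (mat n n (\<lambda>(a,b). D (e b) (\<psi> (e a)))) \<noteq> 0"
    and P: "vars P \<subseteq> I" "subst \<psi> P = 0"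
    and i: "i \<in> I"
  shows "subst \<psi> (D i P) = 0"
proof -
  define Jm where "Jm = mat n n (\<lambda>(a,b). D (e b) (\<psi> (e a)))"
  define W where "W = mat 1 n (\<lambda>(_,a). subst \<psi> (D (e a) P))"
  have Jc: "Jm \<in> carrier_mat n n" and Wc: "W \<in> carrier_mat 1 n" by (auto simp: Jm_def W_def)
  have WJ: "W * Jm = 0\<^sub>m 1 n"
  proof (rule eq_matI)
    fix a b assume ab: "a < dim_row (0\<^sub>m 1 n :: mpoly mat)" "b < dim_col (0\<^sub>m 1 n :: mpoly mat)"
    then have b: "b < n" by simp
    have "(W * Jm) $$ (a, b) = (\<Sum>c<n. subst \<psi> (D (e c) P) * D (e b) (\<psi> (e c)))"
      using ab by (simp add: W_def Jm_def scalar_prod_def atLeast0LessThan)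
    also have "\<dots> = (\<Sum>v\<in>I. subst \<psi> (D v P) * D (e b) (\<psi> v))"
      by (rule sum_reindex_e[OF e])
    also have "\<dots> = D (e b) (subst \<psi> P)"
      by (rule chain_rule[symmetric]) (use fin P in auto)
    also have "\<dots> = 0" using P by simp
    finally show "(W * Jm) $$ (a, b) = 0\<^sub>m 1 n $$ (a, b)" using ab by simp
  qed (auto simp: W_def Jm_def)
  have "det Jm \<cdot>\<^sub>m W = W * (det Jm \<cdot>\<^sub>m 1\<^sub>m n)"
    using mult_smult_distrib[OF Wc one_carrier_mat, of "det Jm"] Wc by simp
  also have "\<dots> = W * (Jm * adj_mat Jm)" using adj_mat(2)[OF Jc] by simp
  also have "\<dots> = (W * Jm) * adj_mat Jm" using Wc Jc adj_mat(1)[OF Jc] by simp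
  also have "\<dots> = 0\<^sub>m 1 n" using WJ adj_mat(1)[OF Jc] by simp
  finally have Z: "det Jm \<cdot>\<^sub>m W = 0\<^sub>m 1 n" .
  from i e obtain a where a: "a < n" "e a = i" unfolding bij_betw_def by auto
  have "(det Jm \<cdot>\<^sub>m W) $$ (0, a) = 0" using Z a by simp
  then have "det Jm * subst \<psi> (D i P) = 0" using a by (simp add: W_def)
  with det show ?thesis by (simp add: Jm_def)
qed

lemma jac_crit:
  fixes \<psi> :: "nat \<Rightarrow> mpoly"
  assumes fin: "finite I" and e: "bij_betw e {0..<n} I"
    and det: "det (mat n n (\<lambda>(a,b). D (e b) (\<psi> (e a)))) \<noteq> 0"
  shows "vars P \<subseteq> I \<Longrightarrow> subst \<psi> P = 0 \<Longrightarrow> P = 0"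
proof -
  have fin_case: "P = 0" if "Poly_Mapping.keys P \<subseteq> {0}" "subst \<psi> P = 0" for P
  proof -
    have "P = Const (Poly_Mapping.lookup P 0)" by (rule keys_0_Const[OF that(1)])
    with that(2) have "Const (Poly_Mapping.lookup P 0) = 0" by (metis subst_Const)
    then show ?thesis using \<open>P = _\<close> by simp
  qed
  have "\<forall>P. vars P \<subseteq> I \<longrightarrow> (\<forall>m\<in>Poly_Mapping.keys P. tdeg m \<le> d) \<longrightarrow> subst \<psi> P = 0 \<longrightarrow> P = 0" for d
  proof (induction d)
    case 0
    show ?case
    proof (intro allI impI)
      fix P assume "vars P \<subseteq> I" "\<forall>m\<in>Poly_Mapping.keys P. tdeg m \<le> 0" "subst \<psi> P = 0"
      then show "P = 0" using fin_case[of P] tdeg_0 by blast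
    qed
  next
    case (Suc d)
    show ?case
    proof (intro allI impI)
      fix P assume P: "vars P \<subseteq> I" "\<forall>m\<in>Poly_Mapping.keys P. tdeg m \<le> Suc d" "subst \<psi> P = 0"
      have "D l P = 0" for l
      proof (cases "l \<in> I")
        case True
        have "subst \<psi> (D l P) = 0" by (rule jac_step[OF fin e det P(1) P(3) True])
        moreover have "vars (D l P) \<subseteq> I" using vars_D P(1) by blast
        moreover have "\<forall>m\<in>Poly_Mapping.keys (D l P). tdeg m \<le> d"
        proof
          fix m assume "m \<in> Poly_Mapping.keys (D l P)"
          then obtain m' where "m' \<in> Poly_Mapping.keys P" "0 < Poly_Mapping.lookup m' l" "m = m' - Poly_Mapping.single l 1"
            using keys_D'[of l P] by blast
          then show "tdeg m \<le> d" using P(2) tdeg_minus[of m' l] by fastforce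
        qed
        ultimately show ?thesis using Suc.IH by blast
      next
        case False
        then show ?thesis using P(1) by (intro D_notin) auto
      qed
      then show "P = 0" using fin_case[of P] D_all_zero[of P] P(3) by blast
    qed
  qed
  moreover have "\<forall>m\<in>Poly_Mapping.keys P. tdeg m \<le> Max (tdeg ` Poly_Mapping.keys P)"
    by (simp add: Max_ge)
  ultimately show "vars P \<subseteq> I \<Longrightarrow> subst \<psi> P = 0 \<Longrightarrow> P = 0"
    by blast
qed

definition good :: "nat \<Rightarrow> (nat \<Rightarrow> mpoly) \<Rightarrow> bool" where
  "good N f \<longleftrightarrow> (\<forall>i. i \<notin> {1..N} \<longrightarrow> f i = Var i) \<and> (\<forall>i\<in>{1..N}. vars (f i) \<subseteq> {1..N})"

lemma subst_compose: "subst f (subst g p) = subst (Defs.compose f g) p"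
  by (simp add: subst_subst Defs.compose_def)

lemma good_vars: assumes "good N f" shows "vars (f i) \<subseteq> {1..N} \<or> i \<notin> {1..N}"
  using assms by (auto simp: good_def)

lemma good_compose: assumes f: "good N f" and g: "good N g" shows "good N (Defs.compose f g)"
  unfolding good_def
proof (intro conjI allI ballI impI)
  fix i assume "i \<notin> {1..N}"
  then show "Defs.compose f g i = Var i" using f g by (simp add: good_def Defs.compose_def)
next
  fix i assume i: "i \<in> {1..N}"
  have "vars (Defs.compose f g i) \<subseteq> (\<Union>j\<in>vars (g i). vars (f j))"
    unfolding Defs.compose_def by (rule vars_subst)
  also have "\<dots> \<subseteq> {1..N}"
  proof (rule UN_least)
    fix j assume "j \<in> vars (g i)"
    then have "j \<in> {1..N}" using g i unfolding good_def by blast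
    then show "vars (f j) \<subseteq> {1..N}" using f unfolding good_def by blast
  qed
  finally show "vars (Defs.compose f g i) \<subseteq> {1..N}" .
qed

lemma inv_compose:
  assumes "Defs.compose f f' = Var" "Defs.compose g g' = Var"
  shows "Defs.compose (Defs.compose f g) (Defs.compose g' f') = Var"
proof
  fix i
  have "Defs.compose (Defs.compose f g) (Defs.compose g' f') i = subst (Defs.compose f g) (subst g' (f' i))"
    by (simp add: Defs.compose_def)
  also have "\<dots> = subst (\<lambda>j. subst (Defs.compose f g) (g' j)) (f' i)" by (rule subst_subst)
  also have "(\<lambda>j. subst (Defs.compose f g) (g' j)) = f"
  proof
    fix j
    have "subst (Defs.compose f g) (g' j) = subst f (subst g (g' j))" by (simp add: subst_compose)
    also have "subst g (g' j) = Var j" using assms(2) by (metis Defs.compose_def)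
    finally show "subst (Defs.compose f g) (g' j) = f j" by simp
  qed
  also have "subst f (f' i) = Var i" using assms(1) by (metis Defs.compose_def)
  finally show "Defs.compose (Defs.compose f g) (Defs.compose g' f') i = Var i" .
qed

lemma elementary_inv: assumes "elementary N f" shows "good N f \<and> (\<exists>f'. good N f' \<and> Defs.compose f f' = Var)"
proof -
  from assms obtain i g where i: "i \<in> {1..N}" and g: "vars g \<subseteq> {1..N} - {i}"
    and f: "f = (\<lambda>j. if j = i then Var i + g else Var j)" by (auto simp: elementary_def)
  define f' where "f' = (\<lambda>j. if j = i then Var i - g else Var j)"
  have gf: "good N f" unfolding good_def f
    using i g vars_add[of "Var i" g] by auto
  have gf': "good N f'" unfolding good_def f'_def
    using i g vars_diff[of "Var i" g] by auto
  have sg: "subst f g = g"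
  proof -
    have "subst f g = subst Var g" by (rule subst_cong) (use g in \<open>auto simp: f\<close>)
    then show ?thesis by simp
  qed
  have "Defs.compose f f' = Var"
  proof
    fix j show "Defs.compose f f' j = Var j"
    proof (cases "j = i")
      case True
      have "Defs.compose f f' j = subst f (Var i - g)" using True by (simp add: Defs.compose_def f'_def)
      also have "\<dots> = f i - g" by (simp only: subst_diff subst_Var sg)
      also have "\<dots> = Var i" by (simp add: f)
      finally show ?thesis using True by simp
    next
      case False
      have "Defs.compose f f' j = subst f (Var j)" using False by (simp add: Defs.compose_def f'_def)
      also have "\<dots> = Var j" using False by (simp add: f)
      finally show ?thesis .
    qed
  qed
  with gf gf' show ?thesis by blast
qed

lemma linear_inv: assumes "linear_aut N f" shows "good N f \<and> (\<exists>f'. good N f' \<and> Defs.compose f f' = Var)"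
proof -
  from assms obtain A B :: "nat \<Rightarrow> nat \<Rightarrow> complex" where
    BA: "\<forall>i\<in>{1..N}. \<forall>l\<in>{1..N}. (\<Sum>j\<in>{1..N}. B i j * A j l) = (if i = l then 1 else 0)" and
    f: "f = (\<lambda>i. if i \<in> {1..N} then (\<Sum>j\<in>{1..N}. Const (A i j) * Var j) else Var i)"
    unfolding linear_aut_def by blast
  define f' where "f' = (\<lambda>i. if i \<in> {1..N} then (\<Sum>j\<in>{1..N}. Const (B i j) * Var j) else Var i)"
  have vl: "vars (\<Sum>j\<in>{1..N}. Const (C j) * Var j) \<subseteq> {1..N}" for C :: "nat \<Rightarrow> complex"
  proof -
    have "vars (\<Sum>j\<in>{1..N}. Const (C j) * Var j) \<subseteq> (\<Union>j\<in>{1..N}. vars (Const (C j) * Var j))"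
      by (rule vars_sum)
    also have "\<dots> \<subseteq> {1..N}" using vars_mult[of "Const _" "Var _"] by fastforce
    finally show ?thesis .
  qed
  have gf: "good N f" unfolding good_def f using vl by auto
  have gf': "good N f'" unfolding good_def f'_def using vl by auto
  have "Defs.compose f f' = Var"
  proof
    fix i show "Defs.compose f f' i = Var i"
    proof (cases "i \<in> {1..N}")
      case False
      have "f' i = Var i" unfolding f'_def by (rule if_not_P[OF False])
      moreover have "f i = Var i" unfolding f by (rule if_not_P[OF False])
      ultimately show ?thesis by (simp add: Defs.compose_def)
    next
      case True
      have "Defs.compose f f' i = (\<Sum>j\<in>{1..N}. Const (B i j) * f j)"
        using True by (simp add: Defs.compose_def f'_def subst_sum subst_mult)
      also have "\<dots> = (\<Sum>j\<in>{1..N}. \<Sum>l\<in>{1..N}. Const (B i j) * (Const (A j l) * Var l))"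
        by (rule sum.cong[OF refl]) (simp add: f sum_distrib_left)
      also have "\<dots> = (\<Sum>l\<in>{1..N}. \<Sum>j\<in>{1..N}. Const (B i j * A j l) * Var l)"
        by (subst sum.swap) (simp add: Const_mult mult.assoc)
      also have "\<dots> = (\<Sum>l\<in>{1..N}. Const (\<Sum>j\<in>{1..N}. B i j * A j l) * Var l)"
        by (simp add: Const_sum sum_distrib_right)
      also have "\<dots> = (\<Sum>l\<in>{1..N}. if l = i then Var l else 0)"
        by (rule sum.cong[OF refl]) (use BA True in auto)
      also have "\<dots> = Var i" using True by (simp add: sum.delta')
      finally show ?thesis .
    qed
  qed
  with gf gf' show ?thesis by blast
qed

lemma tame_inv: "tame N f \<Longrightarrow> good N f \<and> (\<exists>f'. good N f' \<and> Defs.compose f f' = Var)"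
proof (induction rule: tame.induct)
  case (elem f) then show ?case by (rule elementary_inv)
next
  case (lin f) then show ?case by (rule linear_inv)
next
  case (comp f g)
  then obtain f' g' where "good N f'" "Defs.compose f f' = Var" "good N g'" "Defs.compose g g' = Var" by blast
  with comp show ?case using good_compose inv_compose by blast
qed

lemma char_poly_nz: "(A :: complex mat) \<in> carrier_mat n n \<Longrightarrow> char_poly A \<noteq> 0"
  using degree_monic_char_poly[of A n] by (metis coeff_0 zero_neq_one)

lemma finite_bad_char: assumes A: "(A :: complex mat) \<in> carrier_mat n n"
  shows "finite {e. det (char_matrix A e) = 0}"
proof -
  have "{e. det (char_matrix A e) = 0} = {e. poly (char_poly A) e = 0}"
    using eigenvalue_det[OF A] eigenvalue_root_char_poly[OF A] by auto
  then show ?thesis using poly_roots_finite[OF char_poly_nz[OF A]] by simp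
qed

lemma exists_L:
  fixes A P B U :: "complex mat"
  assumes A: "A \<in> carrier_mat n n" and P: "P \<in> carrier_mat n n"
    and B: "B \<in> carrier_mat n k" and U: "U \<in> carrier_mat k n"
    and eq: "A * P + B * U = 1\<^sub>m n"
  shows "\<exists>L \<in> carrier_mat k n. det (A + B * L) \<noteq> 0"
proof -
  define bad1 where "bad1 = uminus ` {e. det (char_matrix P e) = 0}"
  define bad2 where "bad2 = (\<lambda>r. - 1 / r) ` {e. det (char_matrix A e) = 0}"
  have fin: "finite ({0} \<union> bad1 \<union> bad2)"
    unfolding bad1_def bad2_def using finite_bad_char[OF A] finite_bad_char[OF P] by auto
  obtain t :: complex where t: "t \<notin> {0} \<union> bad1 \<union> bad2"
    using ex_new_if_finite[OF infinite_UNIV_char_0 fin] by blast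
  define Q where "Q = P + t \<cdot>\<^sub>m 1\<^sub>m n"
  have Qc: "Q \<in> carrier_mat n n" using P by (simp add: Q_def)
  have "Q = char_matrix P (- t)" using P by (simp add: Q_def char_matrix_def)
  then have dQ: "det Q \<noteq> 0" using t unfolding bad1_def by (auto simp: image_iff)
  define Qi where "Qi = (1 / det Q) \<cdot>\<^sub>m adj_mat Q"
  have Qic: "Qi \<in> carrier_mat n n" using adj_mat(1)[OF Qc] by (simp add: Qi_def)
  have "Q * Qi = (1 / det Q) \<cdot>\<^sub>m (Q * adj_mat Q)"
    unfolding Qi_def by (rule mult_smult_distrib[OF Qc adj_mat(1)[OF Qc]])
  also have "\<dots> = (1 / det Q) \<cdot>\<^sub>m (det Q \<cdot>\<^sub>m 1\<^sub>m n)" using adj_mat(2)[OF Qc] by simp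
  also have "\<dots> = 1\<^sub>m n" using dQ by (intro eq_matI) auto
  finally have QQi: "Q * Qi = 1\<^sub>m n" .
  have QiQ: "Qi * Q = 1\<^sub>m n" by (rule mat_mult_left_right_inverse[OF Qc Qic QQi])
  define L where "L = U * Qi"
  have Lc: "L \<in> carrier_mat k n" using U Qic by (simp add: L_def)
  have BL: "B * L \<in> carrier_mat n n" using B Lc by simp
  have "(A + B * L) * Q = A * Q + B * L * Q"
    by (rule add_mult_distrib_mat[OF A BL Qc])
  also have "B * L * Q = B * U"
  proof -
    have UQi: "U * Qi \<in> carrier_mat k n" using U Qic by simp
    have "B * L * Q = B * ((U * Qi) * Q)" unfolding L_def by (rule assoc_mult_mat[OF B UQi Qc])
    also have "(U * Qi) * Q = U * (Qi * Q)" by (rule assoc_mult_mat[OF U Qic Qc])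
    finally have "B * L * Q = B * (U * (Qi * Q))" .
    also have "\<dots> = B * U" using QiQ U by simp
    finally show ?thesis .
  qed
  also have "A * Q = A * P + t \<cdot>\<^sub>m A"
  proof -
    have "A * Q = A * P + A * (t \<cdot>\<^sub>m 1\<^sub>m n)" unfolding Q_def
      by (rule mult_add_distrib_mat[OF A P]) simp
    also have "A * (t \<cdot>\<^sub>m 1\<^sub>m n) = t \<cdot>\<^sub>m A" using mult_smult_distrib[OF A one_carrier_mat, of t] A by simp
    finally show ?thesis .
  qed
  also have "A * P + t \<cdot>\<^sub>m A + B * U = (A * P + B * U) + t \<cdot>\<^sub>m A"
    using A P B U by (intro eq_matI) (auto simp: ac_simps)
  also have "\<dots> = 1\<^sub>m n + t \<cdot>\<^sub>m A" using eq by simp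
  finally have prodeq: "(A + B * L) * Q = 1\<^sub>m n + t \<cdot>\<^sub>m A" .
  have "1\<^sub>m n + t \<cdot>\<^sub>m A = t \<cdot>\<^sub>m char_matrix A (- 1 / t)"
    using A t by (intro eq_matI) (auto simp: char_matrix_def field_simps)
  then have "det (1\<^sub>m n + t \<cdot>\<^sub>m A) = t ^ n * det (char_matrix A (- 1 / t))"
    using A by (simp add: char_matrix_def)
  moreover have "det (char_matrix A (- 1 / t)) \<noteq> 0"
  proof
    assume "det (char_matrix A (- 1 / t)) = 0"
    then have "t \<in> bad2" unfolding bad2_def by (intro image_eqI[where x="- 1 / t"]) auto
    then show False using t by simp
  qed
  ultimately have "det (1\<^sub>m n + t \<cdot>\<^sub>m A) \<noteq> 0" using t by simp
  then have "det (A + B * L) * det Q \<noteq> 0"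
    using prodeq det_mult[of "A + B * L" n Q] A BL Qc by simp
  then show ?thesis using Lc by auto
qed

lemma sum_shift: fixes N :: nat shows "(\<Sum>c<N. g (Suc c)) = (\<Sum>j\<in>{1..N}. g j)"
proof -
  have "bij_betw Suc {0..<N} {1..N}"
    by (simp add: bij_betw_def image_Suc_atLeastLessThan atLeastLessThanSuc_atLeastAtMost)
  then show ?thesis by (rule sum_reindex_e)
qed

theorem proposition2p4:
  fixes n k :: nat and phi :: "nat \<Rightarrow> mpoly" and I J :: "nat set"
  assumes "n \<ge> 1" and "k \<ge> 1"
    and "tame (n + k) phi"
    and "I \<union> J = {1..n+k}" and "I \<inter> J = {}" and "card I = n" and "card J = k"
  shows "\<exists>q :: nat \<Rightarrow> mpoly. (\<forall>j\<in>J. vars (q j) \<subseteq> I) \<and>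
           inj_on (subst (\<lambda>i. subst (\<lambda>v. if v \<in> J then q v else Var v) (phi i)))
                  {p. vars p \<subseteq> I}"
proof -
  define N where "N = n + k"
  have IJ: "I \<union> J = {1..N}" using assms(4) by (simp add: N_def)
  have disj: "I \<inter> J = {}" by (rule assms(5))
  from tame_inv[OF assms(3)] obtain \<psi> where gphi: "good N phi" and gpsi: "good N \<psi>"
    and inv: "Defs.compose phi \<psi> = Var" by (auto simp: N_def)
  have finIJ: "finite (I \<union> J)" using IJ by simp
  then have finI: "finite I" and finJ: "finite J" by auto
  obtain e where e: "bij_betw e {0..<n} I" using ex_bij_betw_nat_finite[OF finI] assms(6) by auto
  obtain f where f: "bij_betw f {0..<k} J" using ex_bij_betw_nat_finite[OF finJ] assms(7) by auto
  have eI: "a < n \<Longrightarrow> e a \<in> I" for a using e by (auto simp: bij_betw_def)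
  have fJ: "c < k \<Longrightarrow> f c \<in> J" for c using f by (auto simp: bij_betw_def)
  have einj: "a < n \<Longrightarrow> b < n \<Longrightarrow> e a = e b \<longleftrightarrow> a = b" for a b
    using e by (auto simp: bij_betw_def inj_on_def)
  have vphi: "i \<in> {1..N} \<Longrightarrow> vars (phi i) \<subseteq> {1..N}" for i using gphi by (auto simp: good_def)
  have vpsi: "i \<in> {1..N} \<Longrightarrow> vars (\<psi> i) \<subseteq> {1..N}" for i using gpsi by (auto simp: good_def)
  define A where "A i j = ev0 (D j (phi i))" for i j
  define X where "X i j = ev0 (subst phi (D j (\<psi> i)))" for i j
  have XA: "(\<Sum>j\<in>{1..N}. X i j * A j l) = (if i = l then 1 else 0)"
    if "i \<in> {1..N}" "l \<in> {1..N}" for i l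
  proof -
    have "D l (subst phi (\<psi> i)) = (\<Sum>j\<in>{1..N}. subst phi (D j (\<psi> i)) * D l (phi j))"
      by (rule chain_rule) (use vpsi that in auto)
    moreover have "subst phi (\<psi> i) = Var i" using inv by (metis Defs.compose_def)
    ultimately have "ev0 (D l (Var i)) = (\<Sum>j\<in>{1..N}. X i j * A j l)"
      by (simp add: ev0_sum ev0_mult X_def A_def)
    then show ?thesis by (cases "i = l") (simp_all add: D_Var)
  qed
  define Mx where "Mx = mat N N (\<lambda>(a,b). X (Suc a) (Suc b))"
  define Ma where "Ma = mat N N (\<lambda>(a,b). A (Suc a) (Suc b))"
  have Mxc: "Mx \<in> carrier_mat N N" and Mac: "Ma \<in> carrier_mat N N" by (auto simp: Mx_def Ma_def)
  have "Mx * Ma = 1\<^sub>m N"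
  proof (rule eq_matI)
    fix a b assume ab: "a < dim_row (1\<^sub>m N :: complex mat)" "b < dim_col (1\<^sub>m N :: complex mat)"
    then have "(Mx * Ma) $$ (a, b) = (\<Sum>c<N. X (Suc a) (Suc c) * A (Suc c) (Suc b))"
      by (simp add: Mx_def Ma_def scalar_prod_def atLeast0LessThan)
    also have "\<dots> = (\<Sum>j\<in>{1..N}. X (Suc a) j * A j (Suc b))" by (rule sum_shift)
    also have "\<dots> = (if a = b then 1 else 0)" using XA[of "Suc a" "Suc b"] ab by simp
    finally show "(Mx * Ma) $$ (a, b) = 1\<^sub>m N $$ (a, b)" using ab by simp
  qed (auto simp: Mx_def Ma_def)
  then have MaMx: "Ma * Mx = 1\<^sub>m N" by (rule mat_mult_left_right_inverse[OF Mxc Mac])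
  have AX: "(\<Sum>j\<in>{1..N}. A i j * X j l) = (if i = l then 1 else 0)"
    if "i \<in> {1..N}" "l \<in> {1..N}" for i l
  proof -
    define a where "a = i - 1"
    define b where "b = l - 1"
    have a: "i = Suc a" "a < N" using that by (auto simp: a_def)
    have b: "l = Suc b" "b < N" using that by (auto simp: b_def)
    have "(Ma * Mx) $$ (a, b) = (\<Sum>c<N. A (Suc a) (Suc c) * X (Suc c) (Suc b))"
      using a b by (simp add: Mx_def Ma_def scalar_prod_def atLeast0LessThan)
    also have "\<dots> = (\<Sum>j\<in>{1..N}. A (Suc a) j * X j (Suc b))" by (rule sum_shift)
    finally show ?thesis using MaMx a b by simp
  qed
  define Am where "Am = mat n n (\<lambda>(a,b). A (e a) (e b))"
  define Pm where "Pm = mat n n (\<lambda>(a,b). X (e a) (e b))"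
  define Bm where "Bm = mat n k (\<lambda>(a,c). A (e a) (f c))"
  define Um where "Um = mat k n (\<lambda>(c,b). X (f c) (e b))"
  have Amc: "Am \<in> carrier_mat n n" and Pmc: "Pm \<in> carrier_mat n n"
    and Bmc: "Bm \<in> carrier_mat n k" and Umc: "Um \<in> carrier_mat k n"
    by (auto simp: Am_def Pm_def Bm_def Um_def)
  have "Am * Pm + Bm * Um = 1\<^sub>m n"
  proof (rule eq_matI)
    fix a b assume ab: "a < dim_row (1\<^sub>m n :: complex mat)" "b < dim_col (1\<^sub>m n :: complex mat)"
    then have a: "a < n" and b: "b < n" by auto
    have "(Am * Pm + Bm * Um) $$ (a, b) = (\<Sum>c<n. A (e a) (e c) * X (e c) (e b)) + (\<Sum>c<k. A (e a) (f c) * X (f c) (e b))"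
      using a b by (simp add: Am_def Pm_def Bm_def Um_def scalar_prod_def atLeast0LessThan)
    also have "\<dots> = (\<Sum>j\<in>I. A (e a) j * X j (e b)) + (\<Sum>j\<in>J. A (e a) j * X j (e b))"
      using sum_reindex_e[OF e, of "\<lambda>j. A (e a) j * X j (e b)"] sum_reindex_e[OF f, of "\<lambda>j. A (e a) j * X j (e b)"]
      by simp
    also have "\<dots> = (\<Sum>j\<in>{1..N}. A (e a) j * X j (e b))"
      unfolding IJ[symmetric] by (rule sum.union_disjoint[symmetric, OF finI finJ disj])
    also have "\<dots> = (if a = b then 1 else 0)"
    proof -
      have ea: "e a \<in> {1..N}" and eb: "e b \<in> {1..N}" using eI[OF a] eI[OF b] IJ by blast+
      show ?thesis using AX[OF ea eb] einj[OF a b] by simp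
    qed
    finally show "(Am * Pm + Bm * Um) $$ (a, b) = 1\<^sub>m n $$ (a, b)" using a b by simp
  qed (auto simp: Am_def Pm_def Bm_def Um_def)
  from exists_L[OF Amc Pmc Bmc Umc this] obtain Lm where
    Lmc: "Lm \<in> carrier_mat k n" and detL: "det (Am + Bm * Lm) \<noteq> 0" by blast
  define fi where "fi = inv_into {0..<k} f"
  have fif: "c < k \<Longrightarrow> fi (f c) = c" for c
    using f unfolding fi_def bij_betw_def by (simp add: inv_into_f_f)
  define q where "q j = (\<Sum>b<n. Const (Lm $$ (fi j, b)) * Var (e b))" for j
  define s where "s v = (if v \<in> J then q v else Var v)" for v
  define \<psi>' where "\<psi>' i = subst s (phi i)" for i
  have varsq: "vars (q j) \<subseteq> I" for j
  proof -
    have "vars (q j) \<subseteq> (\<Union>b\<in>{..<n}. vars (Const (Lm $$ (fi j, b)) * Var (e b)))"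
      unfolding q_def by (rule vars_sum)
    also have "\<dots> \<subseteq> I" using vars_mult[of "Const _" "Var _"] eI by fastforce
    finally show ?thesis .
  qed
  have ev0s: "ev0 (s v) = 0" for v
    by (simp add: s_def q_def ev0_sum ev0_mult)
  have Dq: "ev0 (D (e b) (q j)) = Lm $$ (fi j, b)" if b: "b < n" for j b
  proof -
    have "ev0 (D (e b) (q j)) = (\<Sum>b'<n. Lm $$ (fi j, b') * (if e b' = e b then 1 else 0))"
      by (simp add: q_def D_sum D_Const_mult D_Var ev0_sum ev0_mult if_distrib[of ev0] cong: if_cong)
    also have "\<dots> = (\<Sum>b'<n. if b' = b then Lm $$ (fi j, b') else 0)"
      by (rule sum.cong[OF refl]) (use einj b in auto)
    also have "\<dots> = Lm $$ (fi j, b)" using b by (simp add: sum.delta')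
    finally show ?thesis .
  qed
  define Jm where "Jm = mat n n (\<lambda>(a,b). D (e b) (\<psi>' (e a)))"
  have Jmc: "Jm \<in> carrier_mat n n" by (simp add: Jm_def)
  have entry: "ev0 (D (e b) (\<psi>' (e a))) = A (e a) (e b) + (\<Sum>c<k. A (e a) (f c) * Lm $$ (c, b))"
    if a: "a < n" and b: "b < n" for a b
  proof -
    have "D (e b) (\<psi>' (e a)) = (\<Sum>v\<in>{1..N}. subst s (D v (phi (e a))) * D (e b) (s v))"
    proof -
      have "e a \<in> {1..N}" using eI[OF a] IJ by blast
      then have "vars (phi (e a)) \<subseteq> {1..N}" by (rule vphi)
      then show ?thesis unfolding \<psi>'_def by (intro chain_rule) auto
    qed
    then have "ev0 (D (e b) (\<psi>' (e a))) = (\<Sum>v\<in>{1..N}. A (e a) v * ev0 (D (e b) (s v)))"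
      by (simp add: ev0_sum ev0_mult ev0_subst[OF ev0s] A_def)
    also have "\<dots> = (\<Sum>v\<in>I. A (e a) v * ev0 (D (e b) (s v))) + (\<Sum>v\<in>J. A (e a) v * ev0 (D (e b) (s v)))"
      unfolding IJ[symmetric] by (rule sum.union_disjoint[OF finI finJ disj])
    also have "(\<Sum>v\<in>I. A (e a) v * ev0 (D (e b) (s v))) = (\<Sum>v\<in>I. if v = e b then A (e a) v else 0)"
      by (rule sum.cong[OF refl]) (use disj in \<open>auto simp: s_def D_Var\<close>)
    also have "\<dots> = A (e a) (e b)" using eI[OF b] finI by (simp add: sum.delta')
    also have "(\<Sum>v\<in>J. A (e a) v * ev0 (D (e b) (s v))) = (\<Sum>v\<in>J. A (e a) v * Lm $$ (fi v, b))"
      by (rule sum.cong[OF refl]) (simp add: s_def Dq[OF b])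
    also have "\<dots> = (\<Sum>c<k. A (e a) (f c) * Lm $$ (fi (f c), b))"
      by (rule sum_reindex_e[OF f, symmetric])
    also have "\<dots> = (\<Sum>c<k. A (e a) (f c) * Lm $$ (c, b))"
      by (rule sum.cong[OF refl]) (simp add: fif)
    finally show ?thesis .
  qed
  have "map_mat ev0 Jm = Am + Bm * Lm"
  proof (rule eq_matI)
    fix a b assume ab: "a < dim_row (Am + Bm * Lm)" "b < dim_col (Am + Bm * Lm)"
    then have a: "a < n" and b: "b < n" using Lmc Bmc by (auto simp: Am_def)
    have "(Am + Bm * Lm) $$ (a, b) = A (e a) (e b) + (\<Sum>c<k. A (e a) (f c) * Lm $$ (c, b))"
      using a b Lmc by (simp add: Am_def Bm_def scalar_prod_def atLeast0LessThan)
    then show "map_mat ev0 Jm $$ (a, b) = (Am + Bm * Lm) $$ (a, b)"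
      using a b entry by (simp add: Jm_def)
  qed (use Lmc Bmc in \<open>auto simp: Jm_def Am_def\<close>)
  then have "ev0 (det Jm) \<noteq> 0"
    using detL comm_ring_hom.hom_det[OF ev0_hom, of Jm] by simp
  then have detJ: "det Jm \<noteq> 0" by auto
  have crit: "P = 0" if "vars P \<subseteq> I" "subst \<psi>' P = 0" for P
    by (rule jac_crit[OF finI e detJ[unfolded Jm_def] that])
  have "inj_on (subst \<psi>') {p. vars p \<subseteq> I}"
  proof (rule inj_onI)
    fix p1 p2 assume p: "p1 \<in> {p. vars p \<subseteq> I}" "p2 \<in> {p. vars p \<subseteq> I}" "subst \<psi>' p1 = subst \<psi>' p2"
    have "vars (p1 - p2) \<subseteq> I" using p vars_diff[of p1 p2] by auto
    moreover have "subst \<psi>' (p1 - p2) = 0" using p by (simp add: subst_diff)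
    ultimately show "p1 = p2" using crit by fastforce
  qed
  then show ?thesis using varsq unfolding \<psi>'_def s_def by blast
qed

end
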